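(* For every mixed graph $G$ without directed cycles, $\mathrm{nd}_{\mathrm m}(G)\le\mathrm{vc}(G)+4^{\mathrm{vc}(G)}$, where $\mathrm{vc}(G)$ is the vertex cover number of the underlying undirected graph.
   Context: A mixed graph $G$ consists of a finite vertex set $V(G)$, a set $E(G)$ of undirected edges and a set $A(G)$ of directed arcs; it is simple and contains no directed cycle. $N^+(v)$, $N^-(v)$, $N^{\mathrm u}(v)$ denote out-, in- and undirected neighbors. Vertices $u,v$ have the same mixed type if $N^{\mathrm u}(u)\setminus\{v\}=N^{\mathrm u}(v)\setminus\{u\}$, $N^-(u)=N^-(v)$, $N^+(u)=N^+(v)$; $\mathrm{nd}_{\mathrm m}(G)$ is the number of mixed types. The underlying undirected graph replaces every arc by an edge. *)

theory Defs
  imports Main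
begin

definition mixed_graph :: "'a set \<Rightarrow> 'a set set \<Rightarrow> ('a \<times> 'a) set \<Rightarrow> bool" where
  "mixed_graph V E A \<longleftrightarrow>
     finite V \<and>
     (\<forall>e\<in>E. \<exists>u v. e = {u, v} \<and> u \<noteq> v \<and> u \<in> V \<and> v \<in> V) \<and>
     A \<subseteq> V \<times> V \<and>
     (\<forall>u v. (u, v) \<in> A \<longrightarrow> u \<noteq> v \<and> {u, v} \<notin> E \<and> (v, u) \<notin> A)"

definition no_directed_cycle :: "('a \<times> 'a) set \<Rightarrow> bool" where
  "no_directed_cycle A \<longleftrightarrow> acyclic A"

definition Nu :: "'a set set \<Rightarrow> 'a \<Rightarrow> 'a set" where
  "Nu E v = {u. {u, v} \<in> E}"

definition Nout :: "('a \<times> 'a) set \<Rightarrow> 'a \<Rightarrow> 'a set" where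
  "Nout A v = {w. (v, w) \<in> A}"

definition Nin :: "('a \<times> 'a) set \<Rightarrow> 'a \<Rightarrow> 'a set" where
  "Nin A v = {w. (w, v) \<in> A}"

definition same_mixed_type :: "'a set set \<Rightarrow> ('a \<times> 'a) set \<Rightarrow> 'a \<Rightarrow> 'a \<Rightarrow> bool" where
  "same_mixed_type E A u v \<longleftrightarrow>
     Nu E u - {v} = Nu E v - {u} \<and> Nin A u = Nin A v \<and> Nout A u = Nout A v"

definition nd_m :: "'a set \<Rightarrow> 'a set set \<Rightarrow> ('a \<times> 'a) set \<Rightarrow> nat" where
  "nd_m V E A = card (V // {(u, v). u \<in> V \<and> v \<in> V \<and> same_mixed_type E A u v})"

definition underlying_edges :: "'a set set \<Rightarrow> ('a \<times> 'a) set \<Rightarrow> 'a set set" where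
  "underlying_edges E A = E \<union> {{u, v} | u v. (u, v) \<in> A}"

definition vertex_cover :: "'a set \<Rightarrow> 'a set set \<Rightarrow> 'a set \<Rightarrow> bool" where
  "vertex_cover V F C \<longleftrightarrow> C \<subseteq> V \<and> (\<forall>e\<in>F. e \<inter> C \<noteq> {})"

definition vc :: "'a set \<Rightarrow> 'a set set \<Rightarrow> ('a \<times> 'a) set \<Rightarrow> nat" where
  "vc V E A = (LEAST k. \<exists>C. vertex_cover V (underlying_edges E A) C \<and> card C = k)"

end

theory Submission
  imports Defs "HOL-Library.FuncSet"
begin

lemma key_eq:
  assumes mg: "mixed_graph V E A" and vcC: "vertex_cover V (underlying_edges E A) C"
    and x: "x \<in> V - C" and y: "y \<in> V - C"
    and nu: "Nu E x = Nu E y" and ni: "Nin A x = Nin A y" and no: "Nout A x = Nout A y"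
  shows "{(u, v). u \<in> V \<and> v \<in> V \<and> same_mixed_type E A u v} `` {x}
       = {(u, v). u \<in> V \<and> v \<in> V \<and> same_mixed_type E A u v} `` {y}"
proof -
  have cov: "\<And>e. e \<in> underlying_edges E A \<Longrightarrow> e \<inter> C \<noteq> {}"
    using vcC unfolding vertex_cover_def by blast
  have edgeC: "a \<in> C \<or> b \<in> C" if "{a, b} \<in> E" for a b
  proof -
    have "{a, b} \<in> underlying_edges E A" using that by (simp add: underlying_edges_def)
    then show ?thesis using cov by blast
  qed
  have "same_mixed_type E A x z = same_mixed_type E A y z" if z: "z \<in> V" for z
  proof -
    have xny: "x \<notin> Nu E y" "y \<notin> Nu E x" using edgeC x y unfolding Nu_def
      by (auto simp: insert_commute)
    have nuxC: "Nu E x \<subseteq> C" using edgeC x unfolding Nu_def by blast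
    have A1: "Nu E x - {z} = Nu E z - {x} \<longleftrightarrow> Nu E y - {z} = Nu E z - {y}"
    proof (cases "z = x \<or> z = y")
      case True
      then show ?thesis using nu xny by auto
    next
      case False
      show ?thesis
      proof (cases "z \<in> C")
        case True
        have "x \<in> Nu E z \<longleftrightarrow> y \<in> Nu E z" using nu unfolding Nu_def
          by (auto simp: insert_commute)
        moreover have "y \<notin> Nu E x - {z}" "x \<notin> Nu E y - {z}" using xny by auto
        ultimately show ?thesis using nu False by blast
      next
        case zC: False
        have "x \<notin> Nu E z" "y \<notin> Nu E z" using edgeC x y zC unfolding Nu_def by auto
        then show ?thesis using nu by auto
      qed
    qed
    show ?thesis unfolding same_mixed_type_def using A1 ni no by auto
  qed
  then show ?thesis using x y by auto
qed

theorem mainTheorem16: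
  fixes V :: "'a set" and E :: "'a set set" and A :: "('a \<times> 'a) set"
  assumes "mixed_graph V E A" and "no_directed_cycle A"
  shows "nd_m V E A \<le> vc V E A + 4 ^ vc V E A"
proof -
  note mg = assms(1)
  have finV: "finite V" using mg unfolding mixed_graph_def by blast
  have "vertex_cover V (underlying_edges E A) V"
    using mg unfolding vertex_cover_def underlying_edges_def mixed_graph_def by blast
  then have "\<exists>k C. vertex_cover V (underlying_edges E A) C \<and> card C = k" by blast
  then have "\<exists>C. vertex_cover V (underlying_edges E A) C \<and> card C = vc V E A"
    unfolding vc_def by (rule LeastI_ex)
  then obtain C where vcC: "vertex_cover V (underlying_edges E A) C" and cC: "card C = vc V E A"
    by blast
  have CV: "C \<subseteq> V" using vcC unfolding vertex_cover_def by blast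
  have finC: "finite C" by (rule finite_subset[OF CV finV])
  define R where "R = {(u, v). u \<in> V \<and> v \<in> V \<and> same_mixed_type E A u v}"
  define sig where "sig x = (\<lambda>c\<in>C. if c \<in> Nu E x then 1 else if c \<in> Nin A x then 2
       else if c \<in> Nout A x then 3 else (0::nat))" for x
  define h where "h s = R `` {SOME x. x \<in> V - C \<and> sig x = s}" for s
  have cov: "\<And>e. e \<in> underlying_edges E A \<Longrightarrow> e \<inter> C \<noteq> {}"
    using vcC unfolding vertex_cover_def by blast
  have edgeC: "a \<in> C \<or> b \<in> C" if "{a, b} \<in> E" for a b
  proof -
    have "{a, b} \<in> underlying_edges E A" using that by (simp add: underlying_edges_def)
    then show ?thesis using cov by blast
  qed
  have arcC: "a \<in> C \<or> b \<in> C" if "(a, b) \<in> A" for a b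
  proof -
    have "{a, b} \<in> underlying_edges E A" using that unfolding underlying_edges_def by blast
    then show ?thesis using cov by blast
  qed
  have arcE: "\<And>a b. (a, b) \<in> A \<Longrightarrow> {a, b} \<notin> E \<and> (b, a) \<notin> A"
    using mg unfolding mixed_graph_def by blast
  have sigeq: "Nu E x = Nu E y \<and> Nin A x = Nin A y \<and> Nout A x = Nout A y"
    if x: "x \<in> V - C" and y: "y \<in> V - C" and s: "sig x = sig y" for x y
  proof -
    have sub: "Nu E z \<subseteq> C \<and> Nin A z \<subseteq> C \<and> Nout A z \<subseteq> C" if "z \<in> V - C" for z
      using that edgeC arcC unfolding Nu_def Nin_def Nout_def by blast
    have dis: "\<not> (c \<in> Nu E z \<and> c \<in> Nin A z) \<and> \<not> (c \<in> Nu E z \<and> c \<in> Nout A z)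
       \<and> \<not> (c \<in> Nin A z \<and> c \<in> Nout A z)" for c z
      using arcE unfolding Nu_def Nin_def Nout_def by (metis (no_types, lifting) insert_commute mem_Collect_eq)
    have pt: "sig x c = sig y c" for c using s by simp
    have "(c \<in> Nu E x \<longleftrightarrow> c \<in> Nu E y) \<and> (c \<in> Nin A x \<longleftrightarrow> c \<in> Nin A y)
        \<and> (c \<in> Nout A x \<longleftrightarrow> c \<in> Nout A y)" for c
    proof (cases "c \<in> C")
      case True
      then show ?thesis using pt[of c] dis[of c x] dis[of c y] unfolding sig_def
        by (auto split: if_splits)
    next
      case False
      then show ?thesis using sub[OF x] sub[OF y] by blast
    qed
    then show ?thesis by blast
  qed
  have quot: "V // R = (\<lambda>x. R `` {x}) ` C \<union> (\<lambda>x. R `` {x}) ` (V - C)"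
    unfolding quotient_def using CV by blast
  have img: "(\<lambda>x. R `` {x}) ` (V - C) = h ` (sig ` (V - C))"
  proof -
    have "R `` {x} = h (sig x)" if x: "x \<in> V - C" for x
    proof -
      have ex: "\<exists>y. y \<in> V - C \<and> sig y = sig x" using x by blast
      define y where "y = (SOME y. y \<in> V - C \<and> sig y = sig x)"
      have y: "y \<in> V - C \<and> sig y = sig x" unfolding y_def by (rule someI_ex[OF ex])
      have "R `` {x} = R `` {y}" unfolding R_def
        using key_eq[OF mg vcC x] y sigeq[OF x, of y] by auto
      then show ?thesis unfolding h_def y_def by simp
    qed
    then show ?thesis by (auto simp: image_image)
  qed
  have sigin: "sig ` (V - C) \<subseteq> C \<rightarrow>\<^sub>E {0..<4}" unfolding sig_def by auto
  have "card (sig ` (V - C)) \<le> card (C \<rightarrow>\<^sub>E {0..<(4::nat)})"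
    by (rule card_mono[OF _ sigin]) (simp add: finC finite_PiE)
  also have "\<dots> = 4 ^ card C" by (simp add: card_PiE finC)
  finally have s1: "card (sig ` (V - C)) \<le> 4 ^ card C" .
  have "card (V // R) \<le> card ((\<lambda>x. R `` {x}) ` C) + card ((\<lambda>x. R `` {x}) ` (V - C))"
    unfolding quot by (rule card_Un_le)
  also have "\<dots> \<le> card C + card (sig ` (V - C))"
    unfolding img by (intro add_mono card_image_le finite_imageI finC) (simp add: finV)
  finally have "card (V // R) \<le> card C + 4 ^ card C" using s1 by linarith
  then show ?thesis unfolding nd_m_def R_def[symmetric] cC .
qed

end
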